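(* Let $\mathcal{D}=\{(x^{(i)},y^{(i)})\}_{i=1}^N$ be a finite paired dataset with $x^{(i)}\in\mathbb{R}^{d_x}$, $y^{(i)}\in\mathbb{R}^{d_y}$, let $d>d_x$ and $d>d_y$, and let $\alpha,\beta:[0,1]\to\mathbb{R}$ be smooth functions that are nonzero except possibly at $t=0$ and $t=1$. Then there exist a data encoder $f_\phi:\mathbb{R}^{d_x}\to\mathbb{R}^d$ and a label encoder $g_\varphi:\mathbb{R}^{d_y}\to\mathbb{R}^d$ such that $(f_\phi,g_\varphi)$ does not induce a target trajectory crossing for data pairs in $\mathcal{D}$, while $g_\varphi$ (together with a suitable label decoder $d_\psi:\mathbb{R}^d\to\mathbb{R}^{d_y}$) minimizes the label autoencoding loss $\mathcal{L}_{label\_ae}(\psi,\varphi)=\mathbb{E}_{(x,y)\sim\mathcal{D}}\big[\|d_\psi(g_\varphi(y))-y\|_2^2\big]$.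
   Context: Given encoders $f_\phi,g_\varphi$, one sets $z_0=f_\phi(x)$, $z_1=g_\varphi(y)$ and uses the predefined interpolation $z_t=F(z_0,z_1,t)=\alpha_t z_0+\beta_t z_1$ for $t\in[0,1]$. The encoders $(f_\phi,g_\varphi)$ are said to induce a target trajectory crossing if there exists a tuple $(t,x,y,x',y')$, with $(x,y),(x',y')$ data pairs in $\mathcal{D}$, $t\in[0,1]$, $x\neq x'$ and $y\neq y'$, such that $\alpha_t f_\phi(x)+\beta_t g_\varphi(y)=\alpha_t f_\phi(x')+\beta_t g_\varphi(y')$. "Non-crossing" means no such tuple exists. *)

theory Defs
  imports "HOL-Analysis.Analysis"
begin

definition smooth_on :: "real set \<Rightarrow> (real \<Rightarrow> real) \<Rightarrow> bool" where
  "smooth_on S f \<longleftrightarrow> (\<exists>Df :: nat \<Rightarrow> real \<Rightarrow> real. Df 0 = f \<and>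
     (\<forall>n. \<forall>t\<in>S. (Df n has_real_derivative Df (Suc n) t) (at t within S)))"

definition target_trajectory_crossing ::
  "(real \<Rightarrow> real) \<Rightarrow> (real \<Rightarrow> real) \<Rightarrow> ('a \<Rightarrow> 'c::real_vector) \<Rightarrow> ('b \<Rightarrow> 'c)
    \<Rightarrow> ('a \<times> 'b) list \<Rightarrow> bool" where
  "target_trajectory_crossing \<alpha> \<beta> f g D \<longleftrightarrow>
     (\<exists>t\<in>{0..1}. \<exists>x y x' y'. (x, y) \<in> set D \<and> (x', y') \<in> set D \<and> x \<noteq> x' \<and> y \<noteq> y' \<and>
        \<alpha> t *\<^sub>R f x + \<beta> t *\<^sub>R g y = \<alpha> t *\<^sub>R f x' + \<beta> t *\<^sub>R g y')"

definition label_ae_loss ::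
  "('a \<times> 'b::real_normed_vector) list \<Rightarrow> ('c \<Rightarrow> 'b) \<Rightarrow> ('b \<Rightarrow> 'c) \<Rightarrow> real" where
  "label_ae_loss D dec g = (\<Sum>(x, y)\<leftarrow>D. (norm (dec (g y) - y))\<^sup>2) / real (length D)"

end

theory Submission
  imports Defs
begin

theorem proposition1:
  fixes D :: "('a::euclidean_space \<times> 'b::euclidean_space) list"
    and \<alpha> \<beta> :: "real \<Rightarrow> real"
  assumes dim_x: "DIM('a) < DIM('c::euclidean_space)"
    and dim_y: "DIM('b) < DIM('c)"
    and smooth_\<alpha>: "smooth_on {0..1} \<alpha>"
    and smooth_\<beta>: "smooth_on {0..1} \<beta>"
    and nz_\<alpha>: "\<forall>t\<in>{0<..<1}. \<alpha> t \<noteq> 0"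
    and nz_\<beta>: "\<forall>t\<in>{0<..<1}. \<beta> t \<noteq> 0"
    and not_both_zero: "\<forall>t\<in>{0..1}. \<alpha> t \<noteq> 0 \<or> \<beta> t \<noteq> 0"
  shows "\<exists>(f :: 'a \<Rightarrow> 'c) (g :: 'b \<Rightarrow> 'c) (dec :: 'c \<Rightarrow> 'b).
           \<not> target_trajectory_crossing \<alpha> \<beta> f g D \<and>
           (\<forall>(dec' :: 'c \<Rightarrow> 'b) (g' :: 'b \<Rightarrow> 'c). label_ae_loss D dec g \<le> label_ae_loss D dec' g')"
proof -
  have "card (Basis :: 'c set) \<ge> 2" using dim_x DIM_positive[where 'a='a] by linarith
  then obtain e1 e2 :: 'c where e: "e1 \<in> Basis" "e2 \<in> Basis" "e1 \<noteq> e2"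
    by (metis One_nat_def Suc_1 card_le_Suc0_iff_eq finite_Basis not_less_eq_eq)
  have o: "e1 \<bullet> e2 = 0" "e2 \<bullet> e1 = 0" using e by (auto simp: inner_not_same_Basis)
  have n: "e1 \<bullet> e1 = 1" "e2 \<bullet> e2 = 1" using e by auto
  define X where "X = fst ` set D"
  define Y where "Y = snd ` set D"
  obtain h1 :: "'a \<Rightarrow> nat" and k1 where h1: "inj_on h1 X"
    using finite_imp_inj_to_nat_seg[of X] unfolding X_def by auto
  obtain h2 :: "'b \<Rightarrow> nat" and k2 where h2: "inj_on h2 Y"
    using finite_imp_inj_to_nat_seg[of Y] unfolding Y_def by auto
  define f :: "'a \<Rightarrow> 'c" where "f x = real (h1 x) *\<^sub>R e2" for x
  define g :: "'b \<Rightarrow> 'c" where "g y = real (h2 y) *\<^sub>R e1" for y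
  define dec :: "'c \<Rightarrow> 'b" where "dec z = (SOME y. y \<in> Y \<and> g y = z)" for z
  have g_inj: "g y = g y' \<Longrightarrow> y \<in> Y \<Longrightarrow> y' \<in> Y \<Longrightarrow> y = y'" for y y'
    using h2 e unfolding g_def by (auto dest: inj_onD)
  have dec_g: "dec (g y) = y" if "y \<in> Y" for y
  proof -
    have "(SOME y'. y' \<in> Y \<and> g y' = g y) \<in> Y \<and> g (SOME y'. y' \<in> Y \<and> g y' = g y) = g y"
      by (rule someI[of _ y]) (use that in auto)
    then show ?thesis unfolding dec_def using g_inj that by blast
  qed
  have nc: "\<not> target_trajectory_crossing \<alpha> \<beta> f g D"
  proof
    assume "target_trajectory_crossing \<alpha> \<beta> f g D"
    then obtain t x y x' y' where t: "t \<in> {0..1}" and m: "(x, y) \<in> set D" "(x', y') \<in> set D"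
      and ne: "x \<noteq> x'" "y \<noteq> y'"
      and eq: "\<alpha> t *\<^sub>R f x + \<beta> t *\<^sub>R g y = \<alpha> t *\<^sub>R f x' + \<beta> t *\<^sub>R g y'"
      unfolding target_trajectory_crossing_def by blast
    have xX: "x \<in> X" "x' \<in> X" using m unfolding X_def by force+
    have yY: "y \<in> Y" "y' \<in> Y" using m unfolding Y_def by force+
    have "(\<alpha> t *\<^sub>R f x + \<beta> t *\<^sub>R g y) \<bullet> e2 = (\<alpha> t *\<^sub>R f x' + \<beta> t *\<^sub>R g y') \<bullet> e2"
      using eq by simp
    then have a: "\<alpha> t * real (h1 x) = \<alpha> t * real (h1 x')"
      unfolding f_def g_def using o n by (simp add: inner_add_left)
    have "(\<alpha> t *\<^sub>R f x + \<beta> t *\<^sub>R g y) \<bullet> e1 = (\<alpha> t *\<^sub>R f x' + \<beta> t *\<^sub>R g y') \<bullet> e1"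
      using eq by simp
    then have b: "\<beta> t * real (h2 y) = \<beta> t * real (h2 y')"
      unfolding f_def g_def using o n by (simp add: inner_add_left)
    have "h1 x \<noteq> h1 x'" using h1 xX ne by (auto dest: inj_onD)
    moreover have "h2 y \<noteq> h2 y'" using h2 yY ne by (auto dest: inj_onD)
    ultimately show False using a b not_both_zero t by auto
  qed
  have z: "label_ae_loss D dec g = 0"
  proof -
    have "(\<Sum>(x, y)\<leftarrow>D. (norm (dec (g y) - y))\<^sup>2) = (\<Sum>(x, y)\<leftarrow>D. (0::real))"
      by (rule arg_cong[where f=sum_list], rule map_cong)
         (auto simp: dec_g Y_def rev_image_eqI)
    moreover have "(\<Sum>(x, y)\<leftarrow>D. (0::real)) = 0" by (induct D) auto
    ultimately show ?thesis unfolding label_ae_loss_def by simp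
  qed
  have "0 \<le> label_ae_loss D dec' g'" for dec' g'
    unfolding label_ae_loss_def
    by (intro divide_nonneg_nonneg sum_list_nonneg) auto
  then show ?thesis using nc z by metis
qed

end
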